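(* Let $F$ be a field of characteristic zero, $\mathrm{Gr}_n$ the Grassmann algebra of $V=\mathrm{Span}\{e_1,\dots,e_n\}$, and $A_0(n)$ the subalgebra of $\mathrm{Gr}_n$ generated by $V$. Let $R$ be a Rota–Baxter operator of weight zero on $\mathrm{Gr}_n$. Then (a) $R(\mathrm{Gr}_n)\subseteq A_0(n)$; (b) $R(e_1\wedge e_2\wedge\dots\wedge e_n)=0$; (c) $(R(1))^{[(n+1)/2]+1}=0$; (d) $\mathrm{rb}(\mathrm{Gr}_n)\le 2[\tfrac{n+1}{2}]+2$.
   Context: A linear operator $R$ on $A$ is a Rota–Baxter operator of weight $0$ if $R(x)R(y)=R(R(x)y+xR(y))$ for all $x,y\in A$. $[\cdot]$ denotes the integer part. The RB-index $\mathrm{rb}(A)$ is the least $n\in\mathbb N$ such that $R^n=0$ for every Rota–Baxter operator $R$ of weight zero on $A$. *)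

theory Defs
  imports Main
begin

text \<open>Grassmann algebra Gr_n over a field F: elements are coefficient functions
  on subsets S of {1..n}; the basis element e_S (S = {i1 < ... < ik}) stands
  for e_i1 \<and> ... \<and> e_ik, and e_{} = 1.\<close>

definition gr :: "nat \<Rightarrow> (nat set \<Rightarrow> 'a::field) set" where
  "gr n = {x. \<forall>S. \<not> S \<subseteq> {1..n} \<longrightarrow> x S = 0}"

text \<open>Sign of e_S e_T for disjoint S, T: (-1)^(number of pairs s \<in> S, t \<in> T with t < s).\<close>
definition gr_sign :: "nat set \<Rightarrow> nat set \<Rightarrow> 'a::field" where
  "gr_sign S T = (-1) ^ card {(s, t). s \<in> S \<and> t \<in> T \<and> t < s}"

definition gr_mult :: "nat \<Rightarrow> (nat set \<Rightarrow> 'a::field) \<Rightarrow> (nat set \<Rightarrow> 'a) \<Rightarrow> (nat set \<Rightarrow> 'a)" where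
  "gr_mult n x y = (\<lambda>U. if U \<subseteq> {1..n}
      then (\<Sum>S\<in>Pow U. gr_sign S (U - S) * x S * y (U - S)) else 0)"

definition gr_add :: "(nat set \<Rightarrow> 'a::field) \<Rightarrow> (nat set \<Rightarrow> 'a) \<Rightarrow> (nat set \<Rightarrow> 'a)" where
  "gr_add x y = (\<lambda>S. x S + y S)"

definition gr_smult :: "'a::field \<Rightarrow> (nat set \<Rightarrow> 'a) \<Rightarrow> (nat set \<Rightarrow> 'a)" where
  "gr_smult c x = (\<lambda>S. c * x S)"

definition gr_zero :: "nat set \<Rightarrow> 'a::field" where
  "gr_zero = (\<lambda>S. 0)"

definition gr_basis :: "nat set \<Rightarrow> (nat set \<Rightarrow> 'a::field)" where
  "gr_basis T = (\<lambda>S. if S = T then 1 else 0)"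

definition gr_one :: "nat set \<Rightarrow> 'a::field" where
  "gr_one = gr_basis {}"

fun gr_pow :: "nat \<Rightarrow> (nat set \<Rightarrow> 'a::field) \<Rightarrow> nat \<Rightarrow> (nat set \<Rightarrow> 'a)" where
  "gr_pow n x 0 = gr_one"
| "gr_pow n x (Suc k) = gr_mult n (gr_pow n x k) x"

inductive_set A0 :: "nat \<Rightarrow> (nat set \<Rightarrow> 'a::field) set" for n where
  gen: "i \<in> {1..n} \<Longrightarrow> gr_basis {i} \<in> A0 n"
| zero: "gr_zero \<in> A0 n"
| add: "x \<in> A0 n \<Longrightarrow> y \<in> A0 n \<Longrightarrow> gr_add x y \<in> A0 n"
| smult: "x \<in> A0 n \<Longrightarrow> gr_smult c x \<in> A0 n"
| mult: "x \<in> A0 n \<Longrightarrow> y \<in> A0 n \<Longrightarrow> gr_mult n x y \<in> A0 n"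

definition gr_linear :: "nat \<Rightarrow> ((nat set \<Rightarrow> 'a::field) \<Rightarrow> (nat set \<Rightarrow> 'a)) \<Rightarrow> bool" where
  "gr_linear n R \<longleftrightarrow> (\<forall>x\<in>gr n. R x \<in> gr n)
     \<and> (\<forall>x\<in>gr n. \<forall>y\<in>gr n. R (gr_add x y) = gr_add (R x) (R y))
     \<and> (\<forall>c. \<forall>x\<in>gr n. R (gr_smult c x) = gr_smult c (R x))"

definition rota_baxter0 :: "nat \<Rightarrow> ((nat set \<Rightarrow> 'a::field) \<Rightarrow> (nat set \<Rightarrow> 'a)) \<Rightarrow> bool" where
  "rota_baxter0 n R \<longleftrightarrow> gr_linear n R \<and>
     (\<forall>x\<in>gr n. \<forall>y\<in>gr n. gr_mult n (R x) (R y) = R (gr_add (gr_mult n (R x) y) (gr_mult n x (R y))))"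

definition rb_index :: "'a::field itself \<Rightarrow> nat \<Rightarrow> nat" where
  "rb_index (_ :: 'a itself) n = (LEAST m. \<forall>R :: (nat set \<Rightarrow> 'a) \<Rightarrow> (nat set \<Rightarrow> 'a).
      rota_baxter0 n R \<longrightarrow> (\<forall>x\<in>gr n. (R ^^ m) x = gr_zero))"

end

theory Submission
  imports Defs
begin



definition invp :: "nat set \<Rightarrow> nat set \<Rightarrow> (nat \<times> nat) set" where
  "invp S T = {(s, t). s \<in> S \<and> t \<in> T \<and> t < s}"

lemma invp_fin: "finite S \<Longrightarrow> finite T \<Longrightarrow> finite (invp S T)"
  by (rule finite_subset[of _ "S \<times> T"]) (auto simp: invp_def)

lemma gr_sign_invp: "gr_sign S T = (-1) ^ card (invp S T)"
  unfolding gr_sign_def invp_def by simp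

lemma gr_sign_empty1[simp]: "gr_sign {} T = 1" and gr_sign_empty2[simp]: "gr_sign S {} = 1"
  unfolding gr_sign_def by simp_all

lemma invp_Un1: "A \<inter> B = {} \<Longrightarrow> invp (A \<union> B) C = invp A C \<union> invp B C"
  and invp_Un2: "invp A (B \<union> C) = invp A B \<union> invp A C"
  by (auto simp: invp_def)

lemma gr_sign_assoc:
  assumes "finite A" "finite B" "finite C" "A \<inter> B = {}" "A \<inter> C = {}" "B \<inter> C = {}"
  shows "gr_sign (A \<union> B) C * gr_sign A B = (gr_sign A (B \<union> C) * gr_sign B C :: 'a::field)"
proof -
  have 1: "card (invp (A \<union> B) C) = card (invp A C) + card (invp B C)"
    unfolding invp_Un1[OF assms(4)]
    by (intro card_Un_disjoint invp_fin assms) (use assms in \<open>auto simp: invp_def\<close>)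
  have 2: "card (invp A (B \<union> C)) = card (invp A B) + card (invp A C)"
    unfolding invp_Un2
    by (intro card_Un_disjoint invp_fin assms) (use assms in \<open>auto simp: invp_def\<close>)
  show ?thesis unfolding gr_sign_invp 1 2 power_add by (simp add: algebra_simps)
qed

lemma gr_sign_sq: "gr_sign S T * gr_sign S T = (1::'a::field)"
  unfolding gr_sign_def by (simp flip: power_add add: power_even_eq[symmetric] mult_2[symmetric])

lemma gr_sign_swap:
  assumes "finite S" "finite T" "S \<inter> T = {}"
  shows "gr_sign S T = ((-1) ^ (card S * card T) * gr_sign T S :: 'a::field)"
proof -
  let ?B' = "{(s, t). s \<in> S \<and> t \<in> T \<and> s < t}"
  have sw: "card (invp T S) = card ?B'"
    by (rule bij_betw_same_card[of "\<lambda>(t,s). (s,t)"]) (auto simp: bij_betw_def inj_on_def invp_def image_def)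
  have un: "S \<times> T = invp S T \<union> ?B'"
    using assms by (auto simp: invp_def)
  have "card (S \<times> T) = card (invp S T) + card ?B'"
    unfolding un
    by (rule card_Un_disjoint) (use assms in \<open>auto simp: invp_fin invp_def intro: finite_subset[of _ "S \<times> T"]\<close>)
  hence c: "card S * card T = card (invp S T) + card (invp T S)" using sw by (simp add: card_cartesian_product)
  have "((-1::'a) ^ (card S * card T) * gr_sign T S) = (-1) ^ card (invp S T) * ((-1) ^ card (invp T S) * (-1) ^ card (invp T S))"
    unfolding gr_sign_invp c power_add by (simp add: algebra_simps)
  also have "\<dots> = (-1) ^ card (invp S T)"
    by (simp flip: power_add add: mult_2[symmetric] power_even_eq[symmetric] )
  finally show ?thesis by (simp add: gr_sign_invp)
qed




lemma sum_single: "finite A \<Longrightarrow> a \<in> A \<Longrightarrow> (\<And>x. x \<in> A \<Longrightarrow> x \<noteq> a \<Longrightarrow> f x = 0) \<Longrightarrow> sum f A = f a"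
  by (subst sum.remove[of A a]) (auto intro: sum.neutral)

lemma gr_mult_in_gr[simp]: "gr_mult n x y \<in> gr n"
  by (auto simp: gr_def gr_mult_def)

lemma gr_mult_out: "\<not> U \<subseteq> {1..n} \<Longrightarrow> gr_mult n x y U = 0"
  by (simp add: gr_mult_def)

lemma gr_out: "x \<in> gr n \<Longrightarrow> \<not> U \<subseteq> {1..n} \<Longrightarrow> x U = 0"
  by (simp add: gr_def)

lemma gr_add_in[simp]: "x \<in> gr n \<Longrightarrow> y \<in> gr n \<Longrightarrow> gr_add x y \<in> gr n"
  and gr_smult_in[simp]: "x \<in> gr n \<Longrightarrow> gr_smult c x \<in> gr n"
  and gr_zero_in[simp]: "gr_zero \<in> gr n"
  and gr_one_in[simp]: "gr_one \<in> gr n"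
  by (auto simp: gr_def gr_add_def gr_smult_def gr_zero_def gr_one_def gr_basis_def)

lemma gr_basis_in: "T \<subseteq> {1..n} \<Longrightarrow> gr_basis T \<in> gr n"
  by (auto simp: gr_def gr_basis_def)

lemma gr_mult_add_left: "gr_mult n (gr_add x y) z = gr_add (gr_mult n x z) (gr_mult n y z)"
  and gr_mult_add_right: "gr_mult n z (gr_add x y) = gr_add (gr_mult n z x) (gr_mult n z y)"
  and gr_mult_smult_left: "gr_mult n (gr_smult c x) z = gr_smult c (gr_mult n x z)"
  and gr_mult_smult_right: "gr_mult n z (gr_smult c x) = gr_smult c (gr_mult n z x)"
  and gr_mult_zero_left: "gr_mult n gr_zero z = gr_zero"
  and gr_mult_zero_right: "gr_mult n z gr_zero = gr_zero"
  by (auto simp: fun_eq_iff gr_mult_def gr_add_def gr_smult_def gr_zero_def algebra_simps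
      sum.distrib sum_distrib_left)

lemma gr_mult_one_left: assumes x: "x \<in> gr n" shows "gr_mult n gr_one x = x"
proof (rule ext)
  fix U
  show "gr_mult n gr_one x U = x U"
  proof (cases "U \<subseteq> {1..n}")
    case True
    hence "finite U" by (meson finite_atLeastAtMost finite_subset)
    thus ?thesis using True
      by (simp add: gr_mult_def gr_one_def gr_basis_def, subst sum_single[where a="{}"]) auto
  qed (use x in \<open>simp add: gr_mult_out gr_def\<close>)
qed

lemma gr_mult_one_right: assumes x: "x \<in> gr n" shows "gr_mult n x gr_one = x"
proof (rule ext)
  fix U
  show "gr_mult n x gr_one U = x U"
  proof (cases "U \<subseteq> {1..n}")
    case True
    hence "finite U" by (meson finite_atLeastAtMost finite_subset)
    thus ?thesis using True
      by (simp add: gr_mult_def gr_one_def gr_basis_def, subst sum_single[where a="U"]) auto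
  qed (use x in \<open>simp add: gr_mult_out gr_def\<close>)
qed

lemma gr_mult_basis_right:
  "gr_mult n x (gr_basis T) U = (if U \<subseteq> {1..n} \<and> T \<subseteq> U then gr_sign (U - T) T * x (U - T) else 0)"
proof (cases "U \<subseteq> {1..n}")
  case True
  hence fin: "finite U" by (meson finite_atLeastAtMost finite_subset)
  show ?thesis
  proof (cases "T \<subseteq> U")
    case True
    have "U - (U - T) = T" using True by auto
    thus ?thesis using fin True \<open>U \<subseteq> {1..n}\<close>
      by (simp add: gr_mult_def gr_basis_def, subst sum_single[where a="U - T"]) auto
  next
    case False
    thus ?thesis using \<open>U \<subseteq> {1..n}\<close>
      by (auto simp: gr_mult_def gr_basis_def intro!: sum.neutral)
  qed
qed (simp add: gr_mult_out)

definition Fil :: "nat \<Rightarrow> (nat set \<Rightarrow> 'a::field) \<Rightarrow> bool" where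
  "Fil k x \<longleftrightarrow> (\<forall>S. card S < k \<longrightarrow> x S = 0)"

lemma Fil_mult: assumes "Fil j x" "Fil k y" shows "Fil (j + k) (gr_mult n x y)"
  unfolding Fil_def
proof (intro allI impI)
  fix U :: "nat set" assume c: "card U < j + k"
  show "gr_mult n x y U = 0"
  proof (cases "U \<subseteq> {1..n}")
    case True
    hence fin: "finite U" by (meson finite_atLeastAtMost finite_subset)
    have "x S * y (U - S) = 0" if "S \<subseteq> U" for S
    proof -
      have "card S + card (U - S) = card U" using that fin
        by (metis card_Diff_subset card_mono diff_add_inverse le_add_diff_inverse finite_subset)
      hence "card S < j \<or> card (U - S) < k" using c by linarith
      thus ?thesis using assms unfolding Fil_def by auto
    qed
    thus ?thesis using True by (auto simp: gr_mult_def intro!: sum.neutral)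
  qed (simp add: gr_mult_out)
qed

lemma Fil_top: assumes "x \<in> gr n" "Fil (n+1) x" shows "x = gr_zero"
proof (rule ext)
  fix U show "x U = gr_zero U"
  proof (cases "U \<subseteq> {1..n}")
    case True
    hence "card U \<le> n" by (metis card_atLeastAtMost card_mono diff_Suc_1 finite_atLeastAtMost)
    thus ?thesis using assms(2) by (simp add: Fil_def gr_zero_def)
  qed (use assms in \<open>simp add: gr_def gr_zero_def\<close>)
qed

lemma Fil_mono: "Fil k x \<Longrightarrow> j \<le> k \<Longrightarrow> Fil j x"
  by (auto simp: Fil_def)

lemma Fil0[simp]: "Fil 0 x" by (simp add: Fil_def)




lemma gr_mult_assoc: "gr_mult n (gr_mult n x y) z = gr_mult n x (gr_mult n y z)"
proof (rule ext)
  fix U :: "nat set"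
  show "gr_mult n (gr_mult n x y) z U = gr_mult n x (gr_mult n y z) U"
  proof (cases "U \<subseteq> {1..n}")
    case True
    hence fin: "finite U" by (meson finite_atLeastAtMost finite_subset)
    define F where "F S V = gr_sign V (U-V) * gr_sign S (V-S) * x S * y (V-S) * z (U-V)" for S V
    define G where "G S W = gr_sign S (U-S) * x S * (gr_sign W (U-S-W) * y W * z (U-S-W))" for S W
    have "gr_mult n (gr_mult n x y) z U = (\<Sum>V\<in>Pow U. \<Sum>S\<in>{S\<in>Pow U. S \<subseteq> V}. F S V)"
    proof -
      have "gr_mult n (gr_mult n x y) z U = (\<Sum>V\<in>Pow U. gr_sign V (U - V) * (\<Sum>S\<in>Pow V. gr_sign S (V - S) * x S * y (V - S)) * z (U - V))"
        using True by (auto simp: gr_mult_def intro!: sum.cong)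
      also have "\<dots> = (\<Sum>V\<in>Pow U. \<Sum>S\<in>{S\<in>Pow U. S \<subseteq> V}. F S V)"
      proof (rule sum.cong[OF refl])
        fix V assume "V \<in> Pow U"
        hence "Pow V = {S\<in>Pow U. S \<subseteq> V}" by auto
        thus "gr_sign V (U - V) * (\<Sum>S\<in>Pow V. gr_sign S (V - S) * x S * y (V - S)) * z (U - V) = (\<Sum>S\<in>{S\<in>Pow U. S \<subseteq> V}. F S V)"
          by (simp add: F_def sum_distrib_left sum_distrib_right algebra_simps)
      qed
      finally show ?thesis .
    qed
    also have "\<dots> = (\<Sum>S\<in>Pow U. \<Sum>V\<in>{V\<in>Pow U. S \<subseteq> V}. F S V)"
      by (rule sum.swap_restrict) (use fin in auto)
    also have "\<dots> = (\<Sum>S\<in>Pow U. \<Sum>W\<in>Pow (U - S). G S W)"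
    proof (rule sum.cong[OF refl])
      fix S assume S: "S \<in> Pow U"
      show "(\<Sum>V\<in>{V\<in>Pow U. S \<subseteq> V}. F S V) = (\<Sum>W\<in>Pow (U - S). G S W)"
      proof (rule sym, rule sum.reindex_bij_witness[of _ "\<lambda>V. V - S" "\<lambda>W. S \<union> W"])
        fix W assume W: "W \<in> Pow (U - S)"
        have fS: "finite S" "finite W" "finite (U - S - W)" using S W fin by (auto intro: finite_subset)
        have e1: "S \<union> W - S = W" "U - (S \<union> W) = U - S - W" using W by auto
        have e2: "W \<union> (U - S - W) = U - S" using W by auto
        have sg: "gr_sign (S \<union> W) (U - S - W) * gr_sign S W = (gr_sign S (W \<union> (U - S - W)) * gr_sign W (U - S - W) :: 'a)"
          by (rule gr_sign_assoc) (use fS W in auto)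
        show "F S (S \<union> W) = G S W"
        proof -
          have "F S (S \<union> W) = (gr_sign (S \<union> W) (U - S - W) * gr_sign S W) * (x S * y W * z (U - S - W))"
            unfolding F_def e1 by (simp add: algebra_simps)
          also have "\<dots> = (gr_sign S (U - S) * gr_sign W (U - S - W)) * (x S * y W * z (U - S - W))"
            using sg e2 by simp
          also have "\<dots> = G S W" unfolding G_def by (simp add: algebra_simps)
          finally show ?thesis .
        qed
      qed (use S in auto)
    qed
    also have "\<dots> = gr_mult n x (gr_mult n y z) U"
      using True by (auto simp: gr_mult_def G_def sum_distrib_left intro!: sum.cong)
    finally show ?thesis .
  qed (simp add: gr_mult_out)
qed




lemma gr_mult_rev:
  assumes "U \<subseteq> {1..n}"
  shows "gr_mult n y x U = (\<Sum>T\<in>Pow U. gr_sign (U - T) T * y (U - T) * x T)"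
proof -
  have "gr_mult n y x U = (\<Sum>S\<in>Pow U. gr_sign S (U - S) * y S * x (U - S))"
    using assms by (simp add: gr_mult_def)
  also have "\<dots> = (\<Sum>T\<in>Pow U. gr_sign (U - T) T * y (U - T) * x T)"
    by (rule sum.reindex_bij_witness[of _ "\<lambda>T. U - T" "\<lambda>T. U - T"]) (auto simp: double_diff)
  finally show ?thesis .
qed

lemma gr_mult_term_swap:
  assumes "U \<subseteq> {1..n}" "T \<subseteq> U"
  shows "gr_sign T (U - T) * x T * y (U - T) = ((-1) ^ (card T * card (U - T)) * (gr_sign (U - T) T * y (U - T) * x T) :: 'a::field)"
proof -
  have fin: "finite U" using assms(1) by (meson finite_atLeastAtMost finite_subset)
  have "gr_sign T (U - T) = ((-1) ^ (card T * card (U - T)) * gr_sign (U - T) T :: 'a)"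
    by (rule gr_sign_swap) (use fin assms in \<open>auto intro: finite_subset\<close>)
  thus ?thesis by (simp add: algebra_simps)
qed

lemma gr_even_comm:
  assumes ev: "\<forall>T. odd (card T) \<longrightarrow> x T = 0"
  shows "gr_mult n x y = gr_mult n y x"
proof (rule ext)
  fix U :: "nat set"
  show "gr_mult n x y U = gr_mult n y x U"
  proof (cases "U \<subseteq> {1..n}")
    case True
    have "gr_mult n x y U = (\<Sum>T\<in>Pow U. gr_sign T (U - T) * x T * y (U - T))"
      using True by (simp add: gr_mult_def)
    also have "\<dots> = (\<Sum>T\<in>Pow U. gr_sign (U - T) T * y (U - T) * x T)"
    proof (rule sum.cong[OF refl])
      fix T assume T: "T \<in> Pow U"
      show "gr_sign T (U - T) * x T * y (U - T) = gr_sign (U - T) T * y (U - T) * x T"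
      proof (cases "odd (card T)")
        case True thus ?thesis using ev by simp
      next
        case False
        thus ?thesis using gr_mult_term_swap[OF \<open>U \<subseteq> {1..n}\<close>, of T x y] T by simp
      qed
    qed
    also have "\<dots> = gr_mult n y x U" using gr_mult_rev[OF True, of y x] by simp
    finally show ?thesis .
  qed (simp add: gr_mult_out)
qed

lemma gr_odd_sq:
  assumes od: "\<forall>T. even (card T) \<longrightarrow> (x::nat set \<Rightarrow> 'a::field_char_0) T = 0"
  shows "gr_mult n x x = gr_zero"
proof (rule ext)
  fix U :: "nat set"
  show "gr_mult n x x U = gr_zero U"
  proof (cases "U \<subseteq> {1..n}")
    case True
    have "gr_mult n x x U = (\<Sum>T\<in>Pow U. gr_sign T (U - T) * x T * x (U - T))"
      using True by (simp add: gr_mult_def)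
    also have "\<dots> = (\<Sum>T\<in>Pow U. - (gr_sign (U - T) T * x (U - T) * x T))"
    proof (rule sum.cong[OF refl])
      fix T assume T: "T \<in> Pow U"
      show "gr_sign T (U - T) * x T * x (U - T) = - (gr_sign (U - T) T * x (U - T) * x T)"
      proof (cases "even (card T) \<or> even (card (U - T))")
        case True thus ?thesis using od by auto
      next
        case False
        hence "odd (card T * card (U - T))" by simp
        thus ?thesis using gr_mult_term_swap[OF \<open>U \<subseteq> {1..n}\<close>, of T x x] T by simp
      qed
    qed
    also have "\<dots> = - gr_mult n x x U" using gr_mult_rev[OF True, of x x] by (simp add: sum_negf)
    finally have "gr_mult n x x U = - gr_mult n x x U" .
    thus ?thesis by (simp add: gr_zero_def)
  qed (simp add: gr_mult_out gr_zero_def)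
qed




context
  fixes n :: nat and R :: "(nat set \<Rightarrow> 'a::field_char_0) \<Rightarrow> (nat set \<Rightarrow> 'a)"
  assumes rb: "rota_baxter0 n R"
begin

lemma R_gr: "x \<in> gr n \<Longrightarrow> R x \<in> gr n"
  using rb by (simp add: rota_baxter0_def gr_linear_def)

lemma R_add: "x \<in> gr n \<Longrightarrow> y \<in> gr n \<Longrightarrow> R (gr_add x y) = gr_add (R x) (R y)"
  using rb by (simp add: rota_baxter0_def gr_linear_def)

lemma R_smult: "x \<in> gr n \<Longrightarrow> R (gr_smult c x) = gr_smult c (R x)"
  using rb by (simp add: rota_baxter0_def gr_linear_def)

lemma R_rb: "x \<in> gr n \<Longrightarrow> y \<in> gr n \<Longrightarrow>
   gr_mult n (R x) (R y) = R (gr_add (gr_mult n (R x) y) (gr_mult n x (R y)))"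
  using rb by (simp add: rota_baxter0_def)

lemma R_zero: "R gr_zero = gr_zero"
proof -
  have "gr_zero = gr_smult 0 (gr_zero :: nat set \<Rightarrow> 'a)" by (simp add: gr_smult_def gr_zero_def)
  hence "R gr_zero = gr_smult 0 (R gr_zero)" using R_smult[of gr_zero 0] by simp
  thus ?thesis by (simp add: gr_smult_def gr_zero_def)
qed

lemma partA_step:
  assumes IH: "\<forall>z\<in>gr n. Fil (k+1) z \<longrightarrow> R z {} = 0"
    and x: "x \<in> gr n" and fx: "Fil k x"
  shows "R x {} = 0"
proof -
  define \<gamma> where "\<gamma> = R x {}"
  define w where "w = gr_add (gr_mult n (R x) x) (gr_mult n x (R x))"
  define z where "z = gr_add w (gr_smult (-2*\<gamma>) x)"
  have Rx: "R x \<in> gr n" using R_gr x by blast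
  have w: "w \<in> gr n" by (simp add: w_def)
  have z: "z \<in> gr n" using w x by (simp add: z_def)
  have "Fil (k+1) z" unfolding Fil_def
  proof (intro allI impI)
    fix U :: "nat set" assume cU: "card U < k + 1"
    show "z U = 0"
    proof (cases "U \<subseteq> {1..n}")
      case True
      hence fin: "finite U" by (meson finite_atLeastAtMost finite_subset)
      have m1: "gr_mult n (R x) x U = \<gamma> * x U"
      proof -
        have "gr_mult n (R x) x U = (\<Sum>S\<in>Pow U. gr_sign S (U - S) * R x S * x (U - S))"
          using True by (simp add: gr_mult_def)
        also have "\<dots> = gr_sign {} (U - {}) * R x {} * x (U - {})"
        proof (rule sum_single)
          fix S assume S: "S \<in> Pow U" "S \<noteq> {}"
          have "card (U - S) < card U" using S fin
            by (metis Diff_subset Pow_iff card_seteq finite_Diff linorder_not_le Diff_empty Diff_eq_empty_iff double_diff subset_refl)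
          hence "x (U - S) = 0" using fx cU by (simp add: Fil_def)
          thus "gr_sign S (U - S) * R x S * x (U - S) = 0" by simp
        qed (use fin in auto)
        finally show ?thesis by (simp add: \<gamma>_def)
      qed
      have m2: "gr_mult n x (R x) U = \<gamma> * x U"
      proof -
        have "gr_mult n x (R x) U = (\<Sum>S\<in>Pow U. gr_sign S (U - S) * x S * R x (U - S))"
          using True by (simp add: gr_mult_def)
        also have "\<dots> = gr_sign U (U - U) * x U * R x (U - U)"
        proof (rule sum_single)
          fix S assume S: "S \<in> Pow U" "S \<noteq> U"
          have "card S < card U" using S fin by (meson PowD psubsetI psubset_card_mono)
          hence "x S = 0" using fx cU by (simp add: Fil_def)
          thus "gr_sign S (U - S) * x S * R x (U - S) = 0" by simp
        qed (use fin in auto)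
        finally show ?thesis by (simp add: \<gamma>_def)
      qed
      show ?thesis unfolding z_def w_def gr_add_def gr_smult_def m1 m2 by (simp add: algebra_simps)
    next
      case False
      thus ?thesis using x unfolding z_def w_def gr_add_def gr_smult_def
        by (simp add: gr_mult_out gr_def)
    qed
  qed
  hence "R z {} = 0" using IH z by blast
  moreover have "R z = gr_add (R w) (gr_smult (-2*\<gamma>) (R x))"
    unfolding z_def using R_add[of w "gr_smult (-2*\<gamma>) x"] R_smult[of x] w x by simp
  moreover have "R w = gr_mult n (R x) (R x)" unfolding w_def using R_rb[OF x x] by simp
  moreover have "gr_mult n (R x) (R x) {} = \<gamma> * \<gamma>" by (simp add: gr_mult_def \<gamma>_def)
  ultimately have "0 = \<gamma> * \<gamma> + (-2*\<gamma>) * R x {}" by (simp add: gr_add_def gr_smult_def)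
  hence "\<gamma> * \<gamma> = 0" by (simp add: \<gamma>_def algebra_simps)
  hence "\<gamma> = 0" by simp
  thus ?thesis by (simp add: \<gamma>_def)
qed

lemma partA: assumes x: "x \<in> gr n" shows "R x {} = 0"
proof -
  have "\<forall>x\<in>gr n. Fil (n + 1 - d) x \<longrightarrow> R x {} = 0" for d
  proof (induction d)
    case 0
    show ?case
    proof (intro ballI impI)
      fix x :: "nat set \<Rightarrow> 'a" assume "x \<in> gr n" "Fil (n + 1 - 0) x"
      hence "x = gr_zero" using Fil_top by simp
      thus "R x {} = 0" using R_zero by (simp add: gr_zero_def)
    qed
  next
    case (Suc d)
    show ?case
    proof (cases "d \<le> n")
      case True
      hence "n + 1 - d = (n + 1 - Suc d) + 1" by simp
      thus ?thesis using partA_step Suc.IH by metis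
    next
      case False
      hence "n + 1 - Suc d = n + 1 - d" by simp
      thus ?thesis using Suc.IH by simp
    qed
  qed
  from this[of "n+1"] x show ?thesis by simp
qed

lemma R_Fil1: "x \<in> gr n \<Longrightarrow> Fil 1 (R x)"
  using partA R_gr unfolding Fil_def
  by (metis card_0_eq finite_atLeastAtMost finite_subset gr_out less_one)

end



lemma basis_A0: "S \<subseteq> {1..n} \<Longrightarrow> S \<noteq> {} \<Longrightarrow> (gr_basis S :: nat set \<Rightarrow> 'a::field) \<in> A0 n"
proof (induction "card S" arbitrary: S)
  case 0
  hence "finite S" by (meson finite_atLeastAtMost finite_subset)
  thus ?case using 0 by simp
next
  case (Suc k)
  have fin: "finite S" using Suc.prems by (meson finite_atLeastAtMost finite_subset)
  define i where "i = Max S"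
  have iS: "i \<in> S" using fin Suc.prems by (simp add: i_def)
  define S' where "S' = S - {i}"
  show ?case
  proof (cases "S' = {}")
    case True
    hence "S = {i}" using iS S'_def by auto
    thus ?thesis using Suc.prems by (auto intro: A0.gen)
  next
    case False
    have cS': "card S' = k" using Suc.hyps(2) fin iS by (simp add: S'_def)
    have IH: "(gr_basis S' :: nat set \<Rightarrow> 'a) \<in> A0 n" using Suc.hyps(1)[OF cS'[symmetric]] Suc.prems(1) False by (simp add: S'_def subset_iff)
    have gi: "(gr_basis {i} :: nat set \<Rightarrow> 'a) \<in> A0 n" using Suc.prems iS by (intro A0.gen) auto
    have sg: "gr_sign (S - {i}) {i} = (1::'a)"
    proof -
      have "invp (S - {i}) {i} = {}" using fin by (auto simp: invp_def S'_def i_def dest: Max_ge[OF fin] )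
      thus ?thesis by (simp add: gr_sign_invp)
    qed
    have "gr_mult n (gr_basis S') (gr_basis {i}) = (gr_basis S :: nat set \<Rightarrow> 'a)"
    proof (rule ext)
      fix U
      have "(U \<subseteq> {1..n} \<and> {i} \<subseteq> U \<and> U - {i} = S') \<longleftrightarrow> U = S"
        using Suc.prems iS by (auto simp: S'_def)
      thus "gr_mult n (gr_basis S') (gr_basis {i}) U = (gr_basis S U :: 'a)"
        unfolding gr_mult_basis_right by (auto simp: gr_basis_def S'_def sg)
    qed
    thus ?thesis using A0.mult[OF IH gi] by simp
  qed
qed

lemma A0_sum: "finite A \<Longrightarrow> (\<And>S. S \<in> A \<Longrightarrow> f S \<in> A0 n) \<Longrightarrow> (\<lambda>U. \<Sum>S\<in>A. f S U) \<in> A0 n"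
proof (induction A rule: finite_induct)
  case empty
  thus ?case using A0.zero by (simp add: gr_zero_def)
next
  case (insert x F)
  have "(\<lambda>U. \<Sum>S\<in>insert x F. f S U) = gr_add (f x) (\<lambda>U. \<Sum>S\<in>F. f S U)"
    using insert.hyps by (simp add: gr_add_def)
  thus ?case using insert A0.add by auto
qed

lemma gr_A0: assumes y: "y \<in> gr n" "y {} = 0" shows "y \<in> A0 n"
proof -
  let ?P = "Pow {1..n} - {{}}"
  have "(\<lambda>U. \<Sum>S\<in>?P. gr_smult (y S) (gr_basis S) U) \<in> A0 n"
    by (rule A0_sum) (auto intro!: A0.smult basis_A0)
  moreover have "(\<lambda>U. \<Sum>S\<in>?P. gr_smult (y S) (gr_basis S) U) = y"
  proof (rule ext)
    fix U
    have "(\<Sum>S\<in>?P. gr_smult (y S) (gr_basis S) U) = (\<Sum>S\<in>?P. if U = S then y U else 0)"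
      by (rule sum.cong) (auto simp: gr_smult_def gr_basis_def)
    also have "\<dots> = (if U \<in> ?P then y U else 0)" by (simp add: sum.delta')
    also have "\<dots> = y U" using y by (auto simp: gr_def)
    finally show "(\<Sum>S\<in>?P. gr_smult (y S) (gr_basis S) U) = y U" .
  qed
  ultimately show ?thesis by simp
qed




context
  fixes n :: nat and R :: "(nat set \<Rightarrow> 'a::field_char_0) \<Rightarrow> (nat set \<Rightarrow> 'a)"
  assumes rb: "rota_baxter0 n R"
begin

lemma partB: "R (gr_basis {1..n}) = gr_zero"
proof -
  define t :: "nat set \<Rightarrow> 'a" where "t = gr_basis {1..n}"
  define c where "c = R t"
  have t: "t \<in> gr n" unfolding t_def by (rule gr_basis_in) simp
  have c: "c \<in> gr n" unfolding c_def using R_gr[OF rb t] .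
  have ft: "Fil n t" by (auto simp: Fil_def t_def gr_basis_def)
  have key: "R (gr_mult n c (gr_basis T)) = gr_mult n c (R (gr_basis T))" if T: "T \<subseteq> {1..n}" for T
  proof -
    have eT: "gr_basis T \<in> gr n" using T by (rule gr_basis_in)
    have "Fil (n + 1) (gr_mult n t (R (gr_basis T)))"
      using Fil_mult[OF ft R_Fil1[OF rb eT]] .
    hence z: "gr_mult n t (R (gr_basis T)) = gr_zero" using Fil_top[OF gr_mult_in_gr] by blast
    have "gr_add (gr_mult n c (gr_basis T)) gr_zero = gr_mult n c (gr_basis T)"
      by (simp add: gr_add_def gr_zero_def)
    thus ?thesis using R_rb[OF rb t eT] z by (simp add: c_def)
  qed
  have "Fil k c" for k
  proof (induction k)
    case (Suc k)
    show ?case unfolding Fil_def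
    proof (intro allI impI)
      fix S0 :: "nat set" assume cS: "card S0 < Suc k"
      show "c S0 = 0"
      proof (cases "card S0 < k")
        case True thus ?thesis using Suc.IH by (simp add: Fil_def)
      next
        case False
        hence ck: "card S0 = k" using cS by simp
        show ?thesis
        proof (cases "S0 \<subseteq> {1..n}")
          case False thus ?thesis using c by (simp add: gr_def)
        next
          case True
          define T where "T = {1..n} - S0"
          define \<sigma> where "\<sigma> = (gr_sign S0 T :: 'a)"
          have fin0: "finite S0" using True by (meson finite_atLeastAtMost finite_subset)
          have e: "gr_mult n c (gr_basis T) = gr_smult (\<sigma> * c S0) t"
          proof (rule ext)
            fix U :: "nat set"
            show "gr_mult n c (gr_basis T) U = gr_smult (\<sigma> * c S0) t U"
            proof (cases "U = {1..n}")
              case True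
              have "U - T = S0" using True \<open>S0 \<subseteq> {1..n}\<close> by (auto simp: T_def)
              thus ?thesis unfolding gr_mult_basis_right using True
                by (auto simp: gr_smult_def t_def gr_basis_def \<sigma>_def T_def)
            next
              case False
              have "c (U - T) = 0" if "U \<subseteq> {1..n}" "T \<subseteq> U"
              proof -
                have "U - T \<subset> S0" using that False \<open>S0 \<subseteq> {1..n}\<close> by (auto simp: T_def)
                hence "card (U - T) < k" using fin0 ck psubset_card_mono by blast
                thus ?thesis using Suc.IH by (simp add: Fil_def)
              qed
              thus ?thesis unfolding gr_mult_basis_right using False
                by (auto simp: gr_smult_def t_def gr_basis_def)
            qed
          qed
          have Tn: "T \<subseteq> {1..n}" by (simp add: T_def)
          have eT: "gr_basis T \<in> gr n" using Tn by (rule gr_basis_in)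
          have "R (gr_mult n c (gr_basis T)) = gr_smult (\<sigma> * c S0) c"
            unfolding e using R_smult[OF rb t] by (simp add: c_def)
          moreover have "Fil (k + 1) (gr_mult n c (R (gr_basis T)))"
            using Fil_mult[OF Suc.IH R_Fil1[OF rb eT]] .
          ultimately have "(\<sigma> * c S0) * c S0 = 0"
            using key[OF Tn] ck by (auto simp: Fil_def gr_smult_def)
          moreover have "\<sigma> \<noteq> 0" using gr_sign_sq[of S0 T, where 'a='a] by (auto simp: \<sigma>_def)
          ultimately show ?thesis by simp
        qed
      qed
    qed
  qed simp
  hence "c = gr_zero" using Fil_top c by blast
  thus ?thesis by (simp add: c_def t_def)
qed

end



lemma gr_pow_in: "gr_pow n x k \<in> gr n"
  by (cases k) auto

lemma gr_pow_Fil: "Fil j x \<Longrightarrow> Fil (j * k) (gr_pow n x k)"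
proof (induction k)
  case (Suc k)
  thus ?case using Fil_mult[OF Suc.IH Suc.prems, of n] by (simp add: add.commute)
qed simp

lemma gr_pow_formula:
  fixes u v :: "nat set \<Rightarrow> 'a::field_char_0"
  assumes u: "u \<in> gr n" and v: "v \<in> gr n"
    and uu: "gr_mult n u u = gr_zero" and vc: "\<And>y. gr_mult n v y = gr_mult n y v"
  shows "gr_pow n (gr_add u v) (Suc k) =
     gr_add (gr_pow n v (Suc k)) (gr_smult (of_nat (Suc k)) (gr_mult n (gr_pow n v k) u))"
proof (induction k)
  case 0
  have a: "gr_add u v \<in> gr n" using u v by simp
  show ?case using gr_mult_one_left[OF a] gr_mult_one_left[OF u] gr_mult_one_left[OF v]
    by (auto simp: gr_add_def gr_smult_def)
next
  case (Suc k)
  define V where "V = gr_pow n v (Suc k)"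
  define W where "W = gr_mult n (gr_pow n v k) u"
  have Wu: "gr_mult n W u = gr_zero"
    unfolding W_def gr_mult_assoc uu gr_mult_zero_right ..
  have Wv: "gr_mult n W v = gr_mult n V u"
    unfolding W_def V_def gr_mult_assoc by (simp add: vc[of u] gr_mult_assoc)
  have "gr_pow n (gr_add u v) (Suc (Suc k)) = gr_mult n (gr_add V (gr_smult (of_nat (Suc k)) W)) (gr_add u v)"
    using Suc.IH by (simp add: V_def W_def)
  also have "\<dots> = gr_add (gr_add (gr_mult n V u) (gr_mult n V v))
      (gr_smult (of_nat (Suc k)) (gr_add (gr_mult n W u) (gr_mult n W v)))"
    unfolding gr_mult_add_left gr_mult_add_right gr_mult_smult_left by (simp add: fun_eq_iff gr_add_def gr_smult_def algebra_simps)
  also have "\<dots> = gr_add (gr_pow n v (Suc (Suc k))) (gr_smult (of_nat (Suc (Suc k))) (gr_mult n (gr_pow n v (Suc k)) u))"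
    unfolding Wu Wv by (auto simp: fun_eq_iff gr_add_def gr_smult_def gr_zero_def V_def algebra_simps)
  finally show ?case .
qed

context
  fixes n :: nat and R :: "(nat set \<Rightarrow> 'a::field_char_0) \<Rightarrow> (nat set \<Rightarrow> 'a)"
  assumes rb: "rota_baxter0 n R"
begin

lemma partC: "gr_pow n (R gr_one) ((n + 1) div 2 + 1) = gr_zero"
proof -
  define a where "a = R gr_one"
  define u where "u = (\<lambda>T. if odd (card T) then a T else 0)"
  define v where "v = (\<lambda>T. if even (card T) then a T else 0)"
  define k where "k = (n + 1) div 2"
  have a: "a \<in> gr n" unfolding a_def by (rule R_gr[OF rb]) simp
  have fa: "Fil 1 a" unfolding a_def by (rule R_Fil1[OF rb]) simp
  have u: "u \<in> gr n" using a by (auto simp: gr_def u_def)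
  have v: "v \<in> gr n" using a by (auto simp: gr_def v_def)
  have auv: "a = gr_add u v" by (auto simp: fun_eq_iff gr_add_def u_def v_def)
  have fu: "Fil 1 u" using fa by (auto simp: Fil_def u_def)
  have fv: "Fil 2 v" using fa by (auto simp: Fil_def v_def)
  have uu: "gr_mult n u u = gr_zero" by (rule gr_odd_sq) (auto simp: u_def)
  have vc: "gr_mult n v y = gr_mult n y v" for y by (rule gr_even_comm) (auto simp: v_def)
  have f: "gr_pow n a (Suc k) = gr_add (gr_pow n v (Suc k)) (gr_smult (of_nat (Suc k)) (gr_mult n (gr_pow n v k) u))"
    unfolding auv by (rule gr_pow_formula[OF u v uu vc])
  have "Fil (2 * Suc k) (gr_pow n v (Suc k))" by (rule gr_pow_Fil[OF fv])
  hence z1: "gr_pow n v (Suc k) = gr_zero"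
    by (intro Fil_top[OF gr_pow_in]) (auto intro: Fil_mono simp: k_def)
  have "Fil (2 * k + 1) (gr_mult n (gr_pow n v k) u)" by (rule Fil_mult[OF gr_pow_Fil[OF fv] fu])
  hence z2: "gr_mult n (gr_pow n v k) u = gr_zero"
    by (intro Fil_top[OF gr_mult_in_gr]) (auto intro: Fil_mono simp: k_def)
  show ?thesis using f z1 z2 by (simp add: a_def k_def gr_add_def gr_smult_def gr_zero_def)
qed

end



inductive_set linsp :: "((nat set \<Rightarrow> 'a::field) \<Rightarrow> (nat set \<Rightarrow> 'a)) \<Rightarrow> ((nat set \<Rightarrow> 'a) \<Rightarrow> (nat set \<Rightarrow> 'a))
    \<Rightarrow> nat \<Rightarrow> (nat set \<Rightarrow> 'a) \<Rightarrow> (nat set \<Rightarrow> 'a) set"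
  for L R j y where
  gen: "p + q = j \<Longrightarrow> (L ^^ p) (R ((L ^^ q) y)) \<in> linsp L R j y"
| add: "z \<in> linsp L R j y \<Longrightarrow> w \<in> linsp L R j y \<Longrightarrow> gr_add z w \<in> linsp L R j y"
| smult: "z \<in> linsp L R j y \<Longrightarrow> gr_smult c z \<in> linsp L R j y"

lemma linsp_L:
  assumes La: "\<And>z w. L (gr_add z w) = gr_add (L z) (L w)" and Ls: "\<And>c z. L (gr_smult c z) = gr_smult c (L z)"
  shows "z \<in> linsp L R j y \<Longrightarrow> L z \<in> linsp L R (Suc j) y"
proof (induction rule: linsp.induct)
  case (gen p q)
  have "L ((L ^^ p) (R ((L ^^ q) y))) = (L ^^ Suc p) (R ((L ^^ q) y))" by simp
  thus ?case using linsp.gen[of "Suc p" q "Suc j" L R y] gen by simp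
qed (auto simp: La Ls intro: linsp.intros)

lemma linsp_shift: "z \<in> linsp L R j (L y) \<Longrightarrow> z \<in> linsp L R (Suc j) y"
proof (induction rule: linsp.induct)
  case (gen p q)
  have "(L ^^ q) (L y) = (L ^^ Suc q) y" by (simp add: funpow_swap1)
  thus ?case using linsp.gen[of p "Suc q" "Suc j" L R y] gen by simp
qed (auto intro: linsp.intros)

lemma linsp_zero:
  assumes "\<forall>p q. p + q = j \<longrightarrow> (L ^^ p) (R ((L ^^ q) y)) = gr_zero"
  shows "z \<in> linsp L R j y \<Longrightarrow> z = gr_zero"
  by (induction rule: linsp.induct) (use assms in \<open>auto simp: gr_add_def gr_smult_def gr_zero_def\<close>)

context
  fixes n :: nat and R :: "(nat set \<Rightarrow> 'a::field_char_0) \<Rightarrow> (nat set \<Rightarrow> 'a)"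
  assumes rb: "rota_baxter0 n R"
begin

definition "Lm = gr_mult n (R gr_one)"

lemma Rpow_gr: "y \<in> gr n \<Longrightarrow> (R ^^ k) y \<in> gr n"
  by (induction k) (auto intro: R_gr[OF rb])

lemma Lpow_gr: "y \<in> gr n \<Longrightarrow> (Lm ^^ k) y \<in> gr n"
  by (cases k) (auto simp: Lm_def)

lemma Lm_add: "Lm (gr_add z w) = gr_add (Lm z) (Lm w)" and Lm_smult: "Lm (gr_smult c z) = gr_smult c (Lm z)"
  by (simp_all add: Lm_def gr_mult_add_right gr_mult_smult_right)

lemma Lm_zero: "(Lm ^^ p) gr_zero = gr_zero"
  by (induction p) (auto simp: Lm_def gr_mult_zero_right)

lemma LR_base: assumes y: "y \<in> gr n" shows "Lm (R y) = gr_add (R (Lm y)) (R (R y))"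
proof -
  have "Lm (R y) = R (gr_add (Lm y) (gr_mult n gr_one (R y)))"
    using R_rb[OF rb gr_one_in y] by (simp add: Lm_def)
  also have "gr_mult n gr_one (R y) = R y" using gr_mult_one_left R_gr[OF rb y] by blast
  finally show ?thesis using R_add[OF rb] y R_gr[OF rb y] by (simp add: Lm_def)
qed

lemma LR_comm: "y \<in> gr n \<Longrightarrow> Lm ((R ^^ k) y) = gr_add ((R ^^ k) (Lm y)) (gr_smult (of_nat k) ((R ^^ Suc k) y))"
proof (induction k)
  case 0 thus ?case by (simp add: gr_add_def gr_smult_def)
next
  case (Suc k)
  have y: "(R ^^ k) y \<in> gr n" using Rpow_gr Suc.prems by blast
  have ly: "Lm y \<in> gr n" by (simp add: Lm_def)
  have "Lm ((R ^^ Suc k) y) = gr_add (R (Lm ((R ^^ k) y))) (R (R ((R ^^ k) y)))"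
    using LR_base[OF y] by simp
  also have "\<dots> = gr_add (R (gr_add ((R ^^ k) (Lm y)) (gr_smult (of_nat k) ((R ^^ Suc k) y)))) ((R ^^ Suc (Suc k)) y)"
    using Suc by simp
  also have "\<dots> = gr_add (gr_add ((R ^^ Suc k) (Lm y)) (gr_smult (of_nat k) ((R ^^ Suc (Suc k)) y))) ((R ^^ Suc (Suc k)) y)"
    using R_add[OF rb] R_smult[OF rb] Rpow_gr[OF ly, of k] Rpow_gr[OF Suc.prems, of "Suc k"] by simp
  also have "\<dots> = gr_add ((R ^^ Suc k) (Lm y)) (gr_smult (of_nat (Suc k)) ((R ^^ Suc (Suc k)) y))"
    by (simp add: fun_eq_iff gr_add_def gr_smult_def algebra_simps)
  finally show ?case .
qed

lemma R_lin: "y \<in> gr n \<Longrightarrow> gr_smult (fact j) ((R ^^ Suc j) y) \<in> linsp Lm R j y"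
proof (induction j arbitrary: y)
  case 0
  have "gr_smult (fact 0) ((R ^^ Suc 0) y) = (Lm ^^ 0) (R ((Lm ^^ 0) y))" by (simp add: gr_smult_def)
  thus ?case using linsp.gen[of 0 0 0 Lm R y] by simp
next
  case (Suc j)
  have ly: "Lm y \<in> gr n" by (simp add: Lm_def)
  have A: "Lm (gr_smult (fact j) ((R ^^ Suc j) y)) \<in> linsp Lm R (Suc j) y"
    by (rule linsp_L[OF Lm_add Lm_smult Suc.IH[OF Suc.prems]])
  have B: "gr_smult (-1) (gr_smult (fact j) ((R ^^ Suc j) (Lm y))) \<in> linsp Lm R (Suc j) y"
    by (rule linsp_shift, rule linsp.smult, rule Suc.IH[OF ly])
  have "gr_smult (fact (Suc j)) ((R ^^ Suc (Suc j)) y) =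
     gr_add (Lm (gr_smult (fact j) ((R ^^ Suc j) y))) (gr_smult (-1) (gr_smult (fact j) ((R ^^ Suc j) (Lm y))))"
    unfolding Lm_smult LR_comm[OF Suc.prems]
    by (simp add: fun_eq_iff gr_add_def gr_smult_def algebra_simps)
  thus ?case using linsp.add[OF A B] by simp
qed

lemma Lpow_mult: "z \<in> gr n \<Longrightarrow> (Lm ^^ k) z = gr_mult n (gr_pow n (R gr_one) k) z"
proof (induction k arbitrary: z)
  case 0 thus ?case by (simp add: gr_mult_one_left)
next
  case (Suc k)
  have "(Lm ^^ Suc k) z = (Lm ^^ k) (Lm z)" by (simp add: funpow_swap1)
  also have "\<dots> = gr_mult n (gr_pow n (R gr_one) k) (Lm z)" using Suc.IH by (simp add: Lm_def)
  also have "\<dots> = gr_mult n (gr_pow n (R gr_one) (Suc k)) z" by (simp add: Lm_def gr_mult_assoc)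
  finally show ?case .
qed

lemma partD: assumes y: "y \<in> gr n" shows "(R ^^ (2 * ((n + 1) div 2) + 2)) y = gr_zero"
proof -
  define m where "m = (n + 1) div 2 + 1"
  have Lnil: "(Lm ^^ m) z = gr_zero" if "z \<in> gr n" for z
    by (simp only: Lpow_mult[OF that] m_def partC[OF rb] gr_mult_zero_left)
  have Lbig: "(Lm ^^ p) z = gr_zero" if "z \<in> gr n" "m \<le> p" for z p
  proof -
    have "(Lm ^^ p) z = (Lm ^^ (p - m)) ((Lm ^^ m) z)"
      using that(2) by (metis funpow_add le_add_diff_inverse2 o_apply)
    thus ?thesis using Lnil[OF that(1)] Lm_zero by simp
  qed
  have "\<forall>p q. p + q = 2 * m - 1 \<longrightarrow> (Lm ^^ p) (R ((Lm ^^ q) y)) = gr_zero"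
  proof (intro allI impI)
    fix p q assume pq: "p + q = 2 * m - 1"
    show "(Lm ^^ p) (R ((Lm ^^ q) y)) = gr_zero"
    proof (cases "m \<le> q")
      case True
      thus ?thesis using Lbig[OF y True] R_zero[OF rb] Lm_zero by simp
    next
      case False
      hence "m \<le> p" using pq by linarith
      thus ?thesis using Lbig R_gr[OF rb Lpow_gr[OF y]] by blast
    qed
  qed
  hence X: "gr_smult (fact (2 * m - 1)) ((R ^^ Suc (2 * m - 1)) y) = gr_zero"
    using linsp_zero R_lin[OF y] by blast
  have eq: "Suc (2 * m - 1) = 2 * ((n + 1) div 2) + 2" by (simp add: m_def)
  have "gr_smult (fact (2 * m - 1) :: 'a) ((R ^^ (2 * ((n + 1) div 2) + 2)) y) = gr_zero"
    using X unfolding eq .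
  thus ?thesis by (auto simp: fun_eq_iff gr_smult_def gr_zero_def)
qed

end


theorem lemma14:
  fixes R :: "(nat set \<Rightarrow> 'a::field_char_0) \<Rightarrow> (nat set \<Rightarrow> 'a)" and n :: nat
  assumes "rota_baxter0 n R"
  shows "(\<forall>x\<in>gr n. R x \<in> A0 n)
    \<and> R (gr_basis {1..n}) = gr_zero
    \<and> gr_pow n (R gr_one) ((n + 1) div 2 + 1) = gr_zero
    \<and> rb_index TYPE('a) n \<le> 2 * ((n + 1) div 2) + 2"
proof (intro conjI)
  show "\<forall>x\<in>gr n. R x \<in> A0 n"
    using gr_A0 R_gr[OF assms] partA[OF assms] by blast
  show "R (gr_basis {1..n}) = gr_zero" by (rule partB[OF assms])
  show "gr_pow n (R gr_one) ((n + 1) div 2 + 1) = gr_zero" by (rule partC[OF assms])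
  show "rb_index TYPE('a) n \<le> 2 * ((n + 1) div 2) + 2"
    unfolding rb_index_def by (rule Least_le) (blast intro: partD)
qed

end
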